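(* Let $Q=[0,L]\times[0,1]$ with $L\ge1$, uniform density $\phi\equiv1$, $n=2$ generators, and $\mathcal H(p_1,p_2)=\int_Q\min_{i=1,2}\|q-p_i\|^2dq$. Consider the centroidal Voronoi configuration $p_1=(L/2,1/4)$, $p_2=(L/2,3/4)$, whose Voronoi cells are the two halves of $Q$ separated by the segment joining the midpoints of the two sides of length 1. If $L>\sqrt{3/2}$, the Hessian $\nabla^2\mathcal H$ at this configuration has exactly one negative eigenvalue; if $L=\sqrt{3/2}$, it has a zero eigenvalue.
   Context: The Voronoi cell of $p_i$ is $V_i=\{q\in Q:\|q-p_i\|\le\|q-p_j\|\ \forall j\}$; a configuration is centroidal if each $p_i$ is the centroid of $V_i$. The Hessian is with respect to $(p_1,p_2)\in\mathbb{R}^4$. *)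

theory Defs
  imports "HOL-Analysis.Analysis" "HOL-Computational_Algebra.Polynomial"
begin

definition rectQ :: "real \<Rightarrow> (real^2) set" where
  "rectQ L = cbox (vector [0, 0]) (vector [L, 1])"

definition Hcost :: "real \<Rightarrow> real^2 \<Rightarrow> real^2 \<Rightarrow> real" where
  "Hcost L p1 p2 = integral (rectQ L) (\<lambda>q. min ((norm (q - p1))\<^sup>2) ((norm (q - p2))\<^sup>2))"

definition Hflat :: "real \<Rightarrow> real^4 \<Rightarrow> real" where
  "Hflat L z = Hcost L (vector [z$1, z$2]) (vector [z$3, z$4])"

definition partial_deriv :: "'n::finite \<Rightarrow> (real^'n \<Rightarrow> real) \<Rightarrow> real^'n \<Rightarrow> real" where
  "partial_deriv i f z = deriv (\<lambda>t. f (z + t *\<^sub>R axis i 1)) 0"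

definition hessian :: "(real^'n::finite \<Rightarrow> real) \<Rightarrow> real^'n \<Rightarrow> real^'n^'n" where
  "hessian f z = (\<chi> i j. partial_deriv i (partial_deriv j f) z)"

definition is_eigenvalue :: "real^'n::finite^'n \<Rightarrow> real \<Rightarrow> bool" where
  "is_eigenvalue A c \<longleftrightarrow> (\<exists>v. v \<noteq> 0 \<and> A *v v = c *\<^sub>R v)"

definition charpoly :: "real^'n::finite^'n \<Rightarrow> real poly" where
  "charpoly A = det (\<chi> i j. (if i = j then [:0, 1:] else 0) - [:A$i$j:])"

definition num_neg_eigenvalues :: "real^'n::finite^'n \<Rightarrow> nat" where
  "num_neg_eigenvalues A =
     (\<Sum>c\<in>{c. c < 0 \<and> is_eigenvalue A c}. order c (charpoly A))"

end

theory Submission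
  imports Defs
begin

definition g2 :: "real \<times> real \<Rightarrow> real^2" where
  "g2 p = fst p *\<^sub>R axis 1 1 + snd p *\<^sub>R axis 2 1"

lemma g2_vec: "g2 (x,y) = vector [x,y]"
  unfolding g2_def vec_eq_iff by (simp add: forall_2 axis_def)

lemma g2_comp [simp]: "g2 p $ 1 = fst p" "g2 p $ 2 = snd p"
  unfolding g2_def by (simp_all add: axis_def)

lemma g2_image: "g2 ` cbox (a,b) (c,d) = cbox (vector[a,b]) (vector[c,d])"
proof (rule set_eqI, rule iffI)
  fix v assume "v \<in> g2 ` cbox (a,b) (c,d)"
  then show "v \<in> cbox (vector[a,b]) (vector[c,d])"
    by (auto simp: mem_box_cart forall_2 mem_box_cart)
next
  fix v :: "real^2" assume v: "v \<in> cbox (vector[a,b]) (vector[c,d])"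
  have "v = g2 (v$1, v$2)" unfolding vec_eq_iff by (simp add: forall_2)
  moreover have "(v$1, v$2) \<in> cbox (a,b) (c,d)" using v by (auto simp: mem_box_cart forall_2)
  ultimately show "v \<in> g2 ` cbox (a,b) (c,d)" by blast
qed

lemma h2_image: "(\<lambda>v::real^2. (v$1, v$2)) ` cbox u v = cbox (u$1,u$2) (v$1,v$2)"
proof (rule set_eqI, rule iffI)
  fix p assume "p \<in> (\<lambda>v::real^2. (v$1, v$2)) ` cbox u v"
  then show "p \<in> cbox (u$1,u$2) (v$1,v$2)"
    by (auto simp: mem_box_cart forall_2)
next
  fix p :: "real \<times> real" assume p: "p \<in> cbox (u$1,u$2) (v$1,v$2)"
  have "p = (\<lambda>v::real^2. (v$1, v$2)) (g2 p)" by simp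
  moreover have "g2 p \<in> cbox u v" using p
    by (cases p) (auto simp: mem_box_cart forall_2)
  ultimately show "p \<in> (\<lambda>v::real^2. (v$1, v$2)) ` cbox u v" by blast
qed

lemma content_g2: "measure lborel (g2 ` cbox u v) = 1 * measure lborel (cbox u v)"
proof -
  obtain a b where u: "u = (a,b)" by (cases u)
  obtain c d where v: "v = (c,d)" by (cases v)
  show ?thesis
  proof (cases "a \<le> c \<and> b \<le> d")
    case True
    then have ne: "cbox (vector[a,b]) (vector[c,d]) \<noteq> ({}::(real^2) set)"
      by (auto simp: mem_box_cart forall_2 set_eq_iff intro!: exI[of _ "vector[a,b]"])
    show ?thesis using True unfolding u v g2_image content_Pair
      by (simp add: content_cbox_cart[OF ne] UNIV_2 content_real)
  next
    case False
    then have e: "cbox (vector[a,b]) (vector[c,d]) = ({}::(real^2) set)"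
      by (auto simp: mem_box_cart forall_2)
    have "measure lborel (cbox (a,b) (c,d)) = 0" using False
      by (auto simp: content_Pair content_real)
    then show ?thesis unfolding u v g2_image e by simp
  qed
qed

lemma integral_R2:
  fixes f :: "real^2 \<Rightarrow> real"
  assumes "continuous_on UNIV f"
  shows "integral (cbox (vector[a,b]) (vector[c,d])) f
       = integral (cbox (a,b) (c,d)) (\<lambda>p. f (vector[fst p, snd p]))"
proof -
  have i: "(f has_integral integral (cbox (vector[a,b]) (vector[c,d])) f) (cbox (vector[a,b]) (vector[c,d]))"
    using assms by (intro integrable_integral integrable_continuous) (auto intro: continuous_on_subset)
  have "((\<lambda>x. f (g2 x)) has_integral (1/1) *\<^sub>R integral (cbox (vector[a,b]) (vector[c,d])) f)
        ((\<lambda>v::real^2. (v$1, v$2)) ` cbox (vector[a,b]) (vector[c,d]))"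
  proof (rule has_integral_twiddle[where g=g2 and h="\<lambda>v::real^2. (v$1, v$2)"])
    show "\<And>x. g2 (x $ 1, x $ 2) = x" unfolding vec_eq_iff by (simp add: forall_2)
    show "\<And>x. (g2 x $ 1, g2 x $ 2) = x" by simp
    show "\<And>x. continuous (at x) g2" unfolding g2_def by (intro continuous_intros)
    show "\<And>u v. \<exists>w z. g2 ` cbox u v = cbox w z"
      by (metis g2_image prod.collapse)
    show "\<And>u v. \<exists>w z. (\<lambda>v::real^2. (v$1, v$2)) ` cbox u v = cbox w z"
      using h2_image by blast
    show "\<And>u v. measure lborel (g2 ` cbox u v) = 1 * measure lborel (cbox u v)" by (rule content_g2)
  qed (use i in auto)
  then have "((\<lambda>x. f (g2 x)) has_integral integral (cbox (vector[a,b]) (vector[c,d])) f) (cbox (a,b) (c,d))"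
    by (simp add: h2_image)
  moreover have "(\<lambda>x. f (g2 x)) = (\<lambda>p. f (vector[fst p, snd p]))"
    by (auto simp: g2_vec[symmetric])
  ultimately show ?thesis by (simp add: integral_unique)
qed
definition kk :: "real \<Rightarrow> real \<Rightarrow> real \<Rightarrow> real \<Rightarrow> real" where
  "kk u1 v1 u2 v2 = (u2 - u1) / (v2 - v1)"
definition ee :: "real \<Rightarrow> real \<Rightarrow> real \<Rightarrow> real \<Rightarrow> real" where
  "ee u1 v1 u2 v2 = (v1 + v2) / 2 + kk u1 v1 u2 v2 * (u1 + u2) / 2"

lemma ftc_poly:
  fixes a b :: real
  assumes "a \<le> b" "\<And>y. y \<in> {a..b} \<Longrightarrow> f y = p' y"
    "\<And>y. (P has_real_derivative p' y) (at y)"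
  shows "(f has_integral (P b - P a)) {a..b}"
proof (rule fundamental_theorem_of_calculus[OF assms(1)])
  fix y assume y: "y \<in> {a..b}"
  have "(P has_real_derivative f y) (at y within {a..b})"
    using assms(3)[of y] assms(2)[OF y] by (simp add: has_field_derivative_at_within)
  then show "(P has_vector_derivative f y) (at y within {a..b})"
    by (simp add: has_real_derivative_iff_has_vector_derivative)
qed

lemma diff_id:
  assumes "v1 < v2"
  shows "((x-u2)^2+(y-v2)^2) - ((x-u1)^2+(y-v1)^2)
       = -2*(v2-v1)*(y - (ee u1 v1 u2 v2 - kk u1 v1 u2 v2 * x))"
proof -
  have nz: "v2 - v1 \<noteq> 0" using assms by simp
  have hk: "kk u1 v1 u2 v2 * (v2 - v1) = u2 - u1" unfolding kk_def using nz by simp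
  have "-2*(v2-v1)*(y - (ee u1 v1 u2 v2 - kk u1 v1 u2 v2 * x))
     = -2*(v2-v1)*y + (v2-v1)*(v1+v2) + (kk u1 v1 u2 v2 * (v2 - v1))*(u1+u2-2*x)"
    unfolding ee_def by (simp add: field_simps)
  also have "\<dots> = -2*(v2-v1)*y + (v2-v1)*(v1+v2) + (u2 - u1)*(u1+u2-2*x)" by (simp only: hk)
  also have "\<dots> = ((x-u2)^2+(y-v2)^2) - ((x-u1)^2+(y-v1)^2)"
    by (simp add: algebra_simps power2_eq_square)
  finally show ?thesis by simp
qed

lemma inner_int:
  fixes x u1 v1 u2 v2 :: real
  defines "y0 \<equiv> ee u1 v1 u2 v2 - kk u1 v1 u2 v2 * x"
  assumes D: "v1 < v2" and y0: "0 \<le> y0" "y0 \<le> 1"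
  shows "((\<lambda>y. min ((x-u1)^2+(y-v1)^2) ((x-u2)^2+(y-v2)^2)) has_integral
          ((x-u1)^2 + ((1-v1)^3+v1^3)/3 - (v2-v1)*(1-y0)^2)) {0..1}"
proof -
  let ?f = "\<lambda>y. min ((x-u1)^2+(y-v1)^2) ((x-u2)^2+(y-v2)^2)"
  have dif: "\<And>y. ((x-u2)^2+(y-v2)^2) - ((x-u1)^2+(y-v1)^2) = -2*(v2-v1)*(y - y0)"
    unfolding y0_def by (rule diff_id[OF D])
  have i1: "(?f has_integral
      (((x-u1)^2*y0 + (y0-v1)^3/3) - ((x-u1)^2*0 + (0-v1)^3/3))) {0..y0}"
  proof (rule ftc_poly[where p'="\<lambda>y. (x-u1)^2+(y-v1)^2"])
    fix y assume y: "y \<in> {0..y0}"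
    have "-2*(v2-v1)*(y - y0) \<ge> 0" using y D by (auto intro!: mult_nonpos_nonpos)
    then show "?f y = (x-u1)^2+(y-v1)^2" using dif[of y] by (simp add: min_def)
  next
    fix y show "((\<lambda>y. (x-u1)^2*y + (y-v1)^3/3) has_real_derivative (x-u1)^2+(y-v1)^2) (at y)"
      by (auto intro!: derivative_eq_intros simp: power2_eq_square)
  qed (use y0 in auto)
  have i2: "(?f has_integral
      (((x-u2)^2*1 + (1-v2)^3/3) - ((x-u2)^2*y0 + (y0-v2)^3/3))) {y0..1}"
  proof (rule ftc_poly[where p'="\<lambda>y. (x-u2)^2+(y-v2)^2"])
    fix y assume y: "y \<in> {y0..1}"
    have "-2*(v2-v1)*(y - y0) \<le> 0" using y D by (auto intro!: mult_nonpos_nonneg)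
    then show "?f y = (x-u2)^2+(y-v2)^2" using dif[of y] by (simp add: min_def)
  next
    fix y show "((\<lambda>y. (x-u2)^2*y + (y-v2)^3/3) has_real_derivative (x-u2)^2+(y-v2)^2) (at y)"
      by (auto intro!: derivative_eq_intros simp: power2_eq_square)
  qed (use y0 in auto)
  have "(?f has_integral
      ((((x-u1)^2*y0 + (y0-v1)^3/3) - ((x-u1)^2*0 + (0-v1)^3/3)) +
       (((x-u2)^2*1 + (1-v2)^3/3) - ((x-u2)^2*y0 + (y0-v2)^3/3)))) {0..1}"
    by (rule has_integral_combine[OF y0 i1 i2])
  moreover have "(((x-u1)^2*y0 + (y0-v1)^3/3) - ((x-u1)^2*0 + (0-v1)^3/3)) +
       (((x-u2)^2*1 + (1-v2)^3/3) - ((x-u2)^2*y0 + (y0-v2)^3/3))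
      = (x-u1)^2 + ((1-v1)^3+v1^3)/3 - (v2-v1)*(1-y0)^2"
  proof -
    have e: "(x-u2)^2 = (x-u1)^2 + v1^2 - v2^2 - 2*(v2-v1)*(- y0)"
      using dif[of 0] by (simp add: algebra_simps)
    show ?thesis unfolding e by (simp add: field_simps power2_eq_square power3_eq_cube)
  qed
  ultimately show ?thesis by simp
qed

definition Fe :: "real \<Rightarrow> real \<Rightarrow> real \<Rightarrow> real \<Rightarrow> real \<Rightarrow> real" where
  "Fe L u1 v1 u2 v2 = ((L-u1)^3+u1^3)/3 + L*((1-v1)^3+v1^3)/3
     - (v2-v1)*((1-ee u1 v1 u2 v2)^2*L + (1-ee u1 v1 u2 v2)*kk u1 v1 u2 v2*L^2
                + (kk u1 v1 u2 v2)^2*L^3/3)"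

lemma norm_vec2: "(norm (vector[x,y] - vector[a,b] :: real^2))^2 = (x-a)^2+(y-b)^2"
  unfolding power2_norm_eq_inner by (simp add: inner_vec_def sum_2 power2_eq_square)

lemma Hcost_formula:
  assumes L: "L \<ge> 0" and D: "v1 < v2"
    and Y: "\<And>x. x \<in> {0..L} \<Longrightarrow> 0 \<le> ee u1 v1 u2 v2 - kk u1 v1 u2 v2 * x \<and> ee u1 v1 u2 v2 - kk u1 v1 u2 v2 * x \<le> 1"
  shows "Hcost L (vector[u1,v1]) (vector[u2,v2]) = Fe L u1 v1 u2 v2"
proof -
  define e where "e = ee u1 v1 u2 v2"
  define k where "k = kk u1 v1 u2 v2"
  let ?h = "\<lambda>p::real\<times>real. min ((fst p-u1)^2+(snd p-v1)^2) ((fst p-u2)^2+(snd p-v2)^2)"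
  have "Hcost L (vector[u1,v1]) (vector[u2,v2])
      = integral (cbox (0,0) (L,1)) (\<lambda>p. min ((norm (vector[fst p, snd p] - vector[u1,v1] :: real^2))\<^sup>2)
                                           ((norm (vector[fst p, snd p] - vector[u2,v2] :: real^2))\<^sup>2))"
    unfolding Hcost_def rectQ_def
    by (rule integral_R2) (intro continuous_intros)
  also have "\<dots> = integral (cbox (0,0) (L,1)) ?h" by (simp only: norm_vec2)
  also have "\<dots> = integral (cbox 0 L) (\<lambda>x. integral (cbox 0 1) (\<lambda>y. ?h (x,y)))"
    by (rule integral_prod_continuous) (intro continuous_intros)
  also have "\<dots> = integral {0..L} (\<lambda>x. (x-u1)^2 + ((1-v1)^3+v1^3)/3 - (v2-v1)*(1-(e - k*x))^2)"
  proof (unfold cbox_interval, rule integral_cong)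
    fix x assume x: "x \<in> {0..L}"
    show "integral {0..1} (\<lambda>y. ?h (x,y)) = (x-u1)^2 + ((1-v1)^3+v1^3)/3 - (v2-v1)*(1-(e - k*x))^2"
      using inner_int[OF D, of u1 u2 x] Y[OF x] unfolding e_def k_def
      by (simp add: integral_unique)
  qed
  also have "\<dots> = ((L-u1)^3/3 + ((1-v1)^3+v1^3)/3*L - (v2-v1)*((1-e)^2*L + (1-e)*k*L^2 + k^2*L^3/3))
       - ((0-u1)^3/3 + ((1-v1)^3+v1^3)/3*0 - (v2-v1)*((1-e)^2*0 + (1-e)*k*0^2 + k^2*0^3/3))"
  proof (rule integral_unique, rule ftc_poly[OF L])
    fix x
    show "((\<lambda>x. (x-u1)^3/3 + ((1-v1)^3+v1^3)/3*x - (v2-v1)*((1-e)^2*x + (1-e)*k*x^2 + k^2*x^3/3))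
          has_real_derivative ((x-u1)^2 + ((1-v1)^3+v1^3)/3 - (v2-v1)*(1-(e - k*x))^2)) (at x)"
      by (rule derivative_eq_intros refl | simp)+ (simp add: field_simps power2_eq_square)
  qed simp
  also have "\<dots> = Fe L u1 v1 u2 v2" unfolding Fe_def e_def[symmetric] k_def[symmetric]
    by (simp add: field_simps)
  finally show ?thesis .
qed

definition F1 :: "real \<Rightarrow> real \<Rightarrow> real \<Rightarrow> real \<Rightarrow> real \<Rightarrow> real" where
  "F1 L u1 v1 u2 v2 = (let e = ee u1 v1 u2 v2; k = kk u1 v1 u2 v2 in
     2*(u1*e*L - (u1*k + e)*L^2/2 + k*L^3/3))"
definition F2 :: "real \<Rightarrow> real \<Rightarrow> real \<Rightarrow> real \<Rightarrow> real \<Rightarrow> real" where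
  "F2 L u1 v1 u2 v2 = (let e = ee u1 v1 u2 v2; k = kk u1 v1 u2 v2 in
     2 * v1 * (e*L - k*L^2/2) - (e^2*L - e*k*L^2 + k^2*L^3/3))"
definition F3 :: "real \<Rightarrow> real \<Rightarrow> real \<Rightarrow> real \<Rightarrow> real \<Rightarrow> real" where
  "F3 L u1 v1 u2 v2 = (let e = ee u1 v1 u2 v2; k = kk u1 v1 u2 v2 in
     2*(u2*(1-e)*L + (u2*k - (1-e))*L^2/2 - k*L^3/3))"
definition F4 :: "real \<Rightarrow> real \<Rightarrow> real \<Rightarrow> real \<Rightarrow> real \<Rightarrow> real" where
  "F4 L u1 v1 u2 v2 = (let e = ee u1 v1 u2 v2; k = kk u1 v1 u2 v2 in
     2 * v2 * (L - e*L + k*L^2/2) - (L - (e^2*L - e*k*L^2 + k^2*L^3/3)))"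

lemma kk_d1: assumes "v1 \<noteq> v2" shows "((\<lambda>t. kk (a+t) v1 u2 v2) has_real_derivative -1/(v2-v1)) (at 0)"
proof -
  have "(\<lambda>t. kk (a+t) v1 u2 v2) = (\<lambda>t. (u2 - a)/(v2-v1) - t * (1/(v2-v1)))"
    by (auto simp: kk_def fun_eq_iff diff_divide_distrib add_divide_distrib)
  then show ?thesis using assms by (auto intro!: derivative_eq_intros)
qed
lemma kk_d3: assumes "v1 \<noteq> v2" shows "((\<lambda>t. kk a v1 (u2+t) v2) has_real_derivative 1/(v2-v1)) (at 0)"
proof -
  have "(\<lambda>t. kk a v1 (u2+t) v2) = (\<lambda>t. (u2 - a)/(v2-v1) + t * (1/(v2-v1)))"
    by (auto simp: kk_def fun_eq_iff diff_divide_distrib add_divide_distrib)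
  then show ?thesis using assms by (auto intro!: derivative_eq_intros)
qed
lemma kk_d2: assumes "v1 \<noteq> v2" shows "((\<lambda>t. kk a (v1+t) u2 v2) has_real_derivative kk a v1 u2 v2/(v2-v1)) (at 0)"
proof -
  have "(\<lambda>t. kk a (v1+t) u2 v2) = (\<lambda>t. (u2 - a) / ((v2-v1) - t))"
    by (auto simp: kk_def fun_eq_iff algebra_simps)
  moreover have "((\<lambda>t. (u2 - a) / ((v2-v1) - t)) has_real_derivative (u2-a)/((v2-v1)*(v2-v1))) (at 0)"
    using assms by (auto intro!: derivative_eq_intros simp: power2_eq_square)
  ultimately show ?thesis by (simp add: kk_def)
qed
lemma kk_d4: assumes "v1 \<noteq> v2" shows "((\<lambda>t. kk a v1 u2 (v2+t)) has_real_derivative -kk a v1 u2 v2/(v2-v1)) (at 0)"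
proof -
  have "(\<lambda>t. kk a v1 u2 (v2+t)) = (\<lambda>t. (u2 - a) / ((v2-v1) + t))"
    by (auto simp: kk_def fun_eq_iff algebra_simps)
  moreover have "((\<lambda>t. (u2 - a) / ((v2-v1) + t)) has_real_derivative (a-u2)/((v2-v1)*(v2-v1))) (at 0)"
    using assms by (auto intro!: derivative_eq_intros simp: power2_eq_square)
  moreover have eq: "-kk a v1 u2 v2/(v2-v1) = (a-u2)/((v2-v1)*(v2-v1))"
    by (simp add: kk_def divide_divide_eq_left) (metis minus_diff_eq minus_divide_left)
  ultimately show ?thesis unfolding eq by simp
qed

lemma Fe_d1: assumes "v1 \<noteq> v2"
  shows "((\<lambda>t. Fe L (a + t) v1 u2 v2) has_real_derivative F1 L a v1 u2 v2) (at 0)"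
proof -
  define D where "D = v2 - v1"
  define k where "k = kk a v1 u2 v2"
  have hk: "k * (v2 - v1) = u2 - a" unfolding k_def kk_def using assms by simp
  have D: "D \<noteq> 0" "v2 = v1 + D" "u2 = a + k*D" using assms hk unfolding D_def by auto
  show ?thesis
    unfolding Fe_def F1_def ee_def Let_def
    apply (rule derivative_eq_intros kk_d1[OF assms] refl | simp)+
    unfolding k_def[symmetric]
    using D apply simp
    apply (simp add: field_simps)
    apply (simp add: algebra_simps power2_eq_square power3_eq_cube)
    done
qed

lemma Fe_d2: assumes "v1 \<noteq> v2"
  shows "((\<lambda>t. Fe L a (v1 + t) u2 v2) has_real_derivative F2 L a v1 u2 v2) (at 0)"
proof -
  define D where "D = v2 - v1"
  define k where "k = kk a v1 u2 v2"
  have hk: "k * (v2 - v1) = u2 - a" unfolding k_def kk_def using assms by simp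
  have D: "D \<noteq> 0" "v2 = v1 + D" "u2 = a + k*D" using assms hk unfolding D_def by auto
  show ?thesis
    unfolding Fe_def F2_def ee_def Let_def
    apply (rule derivative_eq_intros kk_d2[OF assms] refl | simp)+
    unfolding k_def[symmetric]
    using D apply simp
    apply (simp add: field_simps)
    apply (simp add: algebra_simps power2_eq_square power3_eq_cube)
    done
qed

lemma Fe_d3: assumes "v1 \<noteq> v2"
  shows "((\<lambda>t. Fe L a v1 (u2 + t) v2) has_real_derivative F3 L a v1 u2 v2) (at 0)"
proof -
  define D where "D = v2 - v1"
  define k where "k = kk a v1 u2 v2"
  have hk: "k * (v2 - v1) = u2 - a" unfolding k_def kk_def using assms by simp
  have D: "D \<noteq> 0" "v2 = v1 + D" "u2 = a + k*D" using assms hk unfolding D_def by auto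
  show ?thesis
    unfolding Fe_def F3_def ee_def Let_def
    apply (rule derivative_eq_intros kk_d3[OF assms] refl | simp)+
    unfolding k_def[symmetric]
    using D apply simp
    apply (simp add: field_simps)
    done
qed

lemma Fe_d4: assumes "v1 \<noteq> v2"
  shows "((\<lambda>t. Fe L a v1 u2 (v2 + t)) has_real_derivative F4 L a v1 u2 v2) (at 0)"
proof -
  define D where "D = v2 - v1"
  define k where "k = kk a v1 u2 v2"
  have hk: "k * (v2 - v1) = u2 - a" unfolding k_def kk_def using assms by simp
  have D: "D \<noteq> 0" "v2 = v1 + D" "u2 = a + k*D" using assms hk unfolding D_def by auto
  show ?thesis
    unfolding Fe_def F4_def ee_def Let_def
    apply (rule derivative_eq_intros kk_d4[OF assms] refl | simp)+
    unfolding k_def[symmetric]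
    using D apply simp
    apply (simp add: field_simps)
    apply (simp add: algebra_simps power2_eq_square power3_eq_cube)
    done
qed

lemma vector_4 [simp]:
 "(vector [x,y,z,w] ::('a::zero)^4)$1 = x"
 "(vector [x,y,z,w] ::('a::zero)^4)$2 = y"
 "(vector [x,y,z,w] ::('a::zero)^4)$3 = z"
 "(vector [x,y,z,w] ::('a::zero)^4)$4 = w"
  unfolding vector_def by simp_all

definition z0 :: "real \<Rightarrow> real^4" where "z0 L = vector [L/2, 1/4, L/2, 3/4]"

lemma z0_comp [simp]: "z0 L $ 1 = L/2" "z0 L $ 2 = 1/4" "z0 L $ 3 = L/2" "z0 L $ 4 = 3/4"
  unfolding z0_def by simp_all

lemma dd_1_1: "((\<lambda>t. F1 L ((z0 L + t *\<^sub>R axis 1 1)$1) ((z0 L + t *\<^sub>R axis 1 1)$2) ((z0 L + t *\<^sub>R axis 1 1)$3) ((z0 L + t *\<^sub>R axis 1 1)$4)) has_real_derivative (L - L^3/3)) (at 0)"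
  apply (simp add: axis_def)
  unfolding F1_def ee_def kk_def Let_def
  apply (rule derivative_eq_intros refl | simp)+
  apply (simp add: field_simps power2_eq_square power3_eq_cube)?
  done

lemma dd_1_2: "((\<lambda>t. F2 L ((z0 L + t *\<^sub>R axis 1 1)$1) ((z0 L + t *\<^sub>R axis 1 1)$2) ((z0 L + t *\<^sub>R axis 1 1)$3) ((z0 L + t *\<^sub>R axis 1 1)$4)) has_real_derivative (0)) (at 0)"
  apply (simp add: axis_def)
  unfolding F2_def ee_def kk_def Let_def
  apply (rule derivative_eq_intros refl | simp)+
  apply (simp add: field_simps power2_eq_square power3_eq_cube)?
  done

lemma dd_1_3: "((\<lambda>t. F3 L ((z0 L + t *\<^sub>R axis 1 1)$1) ((z0 L + t *\<^sub>R axis 1 1)$2) ((z0 L + t *\<^sub>R axis 1 1)$3) ((z0 L + t *\<^sub>R axis 1 1)$4)) has_real_derivative (L^3/3)) (at 0)"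
  apply (simp add: axis_def)
  unfolding F3_def ee_def kk_def Let_def
  apply (rule derivative_eq_intros refl | simp)+
  apply (simp add: field_simps power2_eq_square power3_eq_cube)?
  done

lemma dd_1_4: "((\<lambda>t. F4 L ((z0 L + t *\<^sub>R axis 1 1)$1) ((z0 L + t *\<^sub>R axis 1 1)$2) ((z0 L + t *\<^sub>R axis 1 1)$3) ((z0 L + t *\<^sub>R axis 1 1)$4)) has_real_derivative (0)) (at 0)"
  apply (simp add: axis_def)
  unfolding F4_def ee_def kk_def Let_def
  apply (rule derivative_eq_intros refl | simp)+
  apply (simp add: field_simps power2_eq_square power3_eq_cube)?
  done

lemma dd_2_1: "((\<lambda>t. F1 L ((z0 L + t *\<^sub>R axis 2 1)$1) ((z0 L + t *\<^sub>R axis 2 1)$2) ((z0 L + t *\<^sub>R axis 2 1)$3) ((z0 L + t *\<^sub>R axis 2 1)$4)) has_real_derivative (0)) (at 0)"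
  apply (simp add: axis_def)
  unfolding F1_def ee_def kk_def Let_def
  apply (rule derivative_eq_intros refl | simp)+
  apply (simp add: field_simps power2_eq_square power3_eq_cube)?
  done

lemma dd_2_2: "((\<lambda>t. F2 L ((z0 L + t *\<^sub>R axis 2 1)$1) ((z0 L + t *\<^sub>R axis 2 1)$2) ((z0 L + t *\<^sub>R axis 2 1)$3) ((z0 L + t *\<^sub>R axis 2 1)$4)) has_real_derivative (3*L/4)) (at 0)"
  apply (simp add: axis_def)
  unfolding F2_def ee_def kk_def Let_def
  apply (rule derivative_eq_intros refl | simp)+
  apply (simp add: field_simps power2_eq_square power3_eq_cube)?
  done

lemma dd_2_3: "((\<lambda>t. F3 L ((z0 L + t *\<^sub>R axis 2 1)$1) ((z0 L + t *\<^sub>R axis 2 1)$2) ((z0 L + t *\<^sub>R axis 2 1)$3) ((z0 L + t *\<^sub>R axis 2 1)$4)) has_real_derivative (0)) (at 0)"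
  apply (simp add: axis_def)
  unfolding F3_def ee_def kk_def Let_def
  apply (rule derivative_eq_intros refl | simp)+
  apply (simp add: field_simps power2_eq_square power3_eq_cube)?
  done

lemma dd_2_4: "((\<lambda>t. F4 L ((z0 L + t *\<^sub>R axis 2 1)$1) ((z0 L + t *\<^sub>R axis 2 1)$2) ((z0 L + t *\<^sub>R axis 2 1)$3) ((z0 L + t *\<^sub>R axis 2 1)$4)) has_real_derivative (-L/4)) (at 0)"
  apply (simp add: axis_def)
  unfolding F4_def ee_def kk_def Let_def
  apply (rule derivative_eq_intros refl | simp)+
  apply (simp add: field_simps power2_eq_square power3_eq_cube)?
  done

lemma dd_3_1: "((\<lambda>t. F1 L ((z0 L + t *\<^sub>R axis 3 1)$1) ((z0 L + t *\<^sub>R axis 3 1)$2) ((z0 L + t *\<^sub>R axis 3 1)$3) ((z0 L + t *\<^sub>R axis 3 1)$4)) has_real_derivative (L^3/3)) (at 0)"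
  apply (simp add: axis_def)
  unfolding F1_def ee_def kk_def Let_def
  apply (rule derivative_eq_intros refl | simp)+
  apply (simp add: field_simps power2_eq_square power3_eq_cube)?
  done

lemma dd_3_2: "((\<lambda>t. F2 L ((z0 L + t *\<^sub>R axis 3 1)$1) ((z0 L + t *\<^sub>R axis 3 1)$2) ((z0 L + t *\<^sub>R axis 3 1)$3) ((z0 L + t *\<^sub>R axis 3 1)$4)) has_real_derivative (0)) (at 0)"
  apply (simp add: axis_def)
  unfolding F2_def ee_def kk_def Let_def
  apply (rule derivative_eq_intros refl | simp)+
  apply (simp add: field_simps power2_eq_square power3_eq_cube)?
  done

lemma dd_3_3: "((\<lambda>t. F3 L ((z0 L + t *\<^sub>R axis 3 1)$1) ((z0 L + t *\<^sub>R axis 3 1)$2) ((z0 L + t *\<^sub>R axis 3 1)$3) ((z0 L + t *\<^sub>R axis 3 1)$4)) has_real_derivative (L - L^3/3)) (at 0)"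
  apply (simp add: axis_def)
  unfolding F3_def ee_def kk_def Let_def
  apply (rule derivative_eq_intros refl | simp)+
  apply (simp add: field_simps power2_eq_square power3_eq_cube)?
  done

lemma dd_3_4: "((\<lambda>t. F4 L ((z0 L + t *\<^sub>R axis 3 1)$1) ((z0 L + t *\<^sub>R axis 3 1)$2) ((z0 L + t *\<^sub>R axis 3 1)$3) ((z0 L + t *\<^sub>R axis 3 1)$4)) has_real_derivative (0)) (at 0)"
  apply (simp add: axis_def)
  unfolding F4_def ee_def kk_def Let_def
  apply (rule derivative_eq_intros refl | simp)+
  apply (simp add: field_simps power2_eq_square power3_eq_cube)?
  done

lemma dd_4_1: "((\<lambda>t. F1 L ((z0 L + t *\<^sub>R axis 4 1)$1) ((z0 L + t *\<^sub>R axis 4 1)$2) ((z0 L + t *\<^sub>R axis 4 1)$3) ((z0 L + t *\<^sub>R axis 4 1)$4)) has_real_derivative (0)) (at 0)"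
  apply (simp add: axis_def)
  unfolding F1_def ee_def kk_def Let_def
  apply (rule derivative_eq_intros refl | simp)+
  apply (simp add: field_simps power2_eq_square power3_eq_cube)?
  done

lemma dd_4_2: "((\<lambda>t. F2 L ((z0 L + t *\<^sub>R axis 4 1)$1) ((z0 L + t *\<^sub>R axis 4 1)$2) ((z0 L + t *\<^sub>R axis 4 1)$3) ((z0 L + t *\<^sub>R axis 4 1)$4)) has_real_derivative (-L/4)) (at 0)"
  apply (simp add: axis_def)
  unfolding F2_def ee_def kk_def Let_def
  apply (rule derivative_eq_intros refl | simp)+
  apply (simp add: field_simps power2_eq_square power3_eq_cube)?
  done

lemma dd_4_3: "((\<lambda>t. F3 L ((z0 L + t *\<^sub>R axis 4 1)$1) ((z0 L + t *\<^sub>R axis 4 1)$2) ((z0 L + t *\<^sub>R axis 4 1)$3) ((z0 L + t *\<^sub>R axis 4 1)$4)) has_real_derivative (0)) (at 0)"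
  apply (simp add: axis_def)
  unfolding F3_def ee_def kk_def Let_def
  apply (rule derivative_eq_intros refl | simp)+
  apply (simp add: field_simps power2_eq_square power3_eq_cube)?
  done

lemma dd_4_4: "((\<lambda>t. F4 L ((z0 L + t *\<^sub>R axis 4 1)$1) ((z0 L + t *\<^sub>R axis 4 1)$2) ((z0 L + t *\<^sub>R axis 4 1)$3) ((z0 L + t *\<^sub>R axis 4 1)$4)) has_real_derivative (3*L/4)) (at 0)"
  apply (simp add: axis_def)
  unfolding F4_def ee_def kk_def Let_def
  apply (rule derivative_eq_intros refl | simp)+
  apply (simp add: field_simps power2_eq_square power3_eq_cube)?
  done

lemma nbhd_conds:
  assumes L: "L \<ge> 1" and r: "r = 1/(20*L)"
    and a: "\<bar>u1 - L/2\<bar> < r" "\<bar>u2 - L/2\<bar> < r" "\<bar>v1 - 1/4\<bar> < r" "\<bar>v2 - 3/4\<bar> < r"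
  shows "v1 < v2" "\<And>x. x \<in> {0..L} \<Longrightarrow> 0 \<le> ee u1 v1 u2 v2 - kk u1 v1 u2 v2 * x \<and> ee u1 v1 u2 v2 - kk u1 v1 u2 v2 * x \<le> 1"
proof -
  have rp: "r > 0" using L r by simp
  have rL: "r * L = 1/20" using L r by simp
  have "r * 1 \<le> r * L" by (rule mult_left_mono) (use L rp in auto)
  then have r1: "r \<le> 1/20" using rL by simp
  have D: "v2 - v1 > 2/5" using a r1 by linarith
  then show "v1 < v2" by simp
  fix x assume x: "x \<in> {0..L}"
  define k where "k = kk u1 v1 u2 v2"
  have kabs: "\<bar>k\<bar> \<le> 5*r"
  proof -
    have "\<bar>k\<bar> = \<bar>u2-u1\<bar>/(v2-v1)" unfolding k_def kk_def using D by (simp add: abs_divide)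
    also have "\<dots> \<le> (2*r)/(2/5)"
      by (rule frac_le) (use a D in auto)
    finally show ?thesis by simp
  qed
  have m0: "u1+u2-2*x \<le> L + 2*r \<and> -(u1+u2-2*x) \<le> L + 2*r" using a x by (auto simp: abs_less_iff)
  have m: "\<bar>u1+u2-2*x\<bar> \<le> 11/10*L" using m0 r1 L by linarith
  have "\<bar>k*(u1+u2-2*x)\<bar> \<le> (5*r)*(11/10*L)"
    unfolding abs_mult by (rule mult_mono) (use kabs m rp in auto)
  also have "\<dots> = 11/40" using rL by (simp add: algebra_simps)
  finally have km: "\<bar>k*(u1+u2-2*x)\<bar> \<le> 11/40" .
  have eq: "ee u1 v1 u2 v2 - kk u1 v1 u2 v2 * x = (v1+v2)/2 + k*(u1+u2-2*x)/2"
    unfolding ee_def k_def by (simp add: field_simps)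
  show "0 \<le> ee u1 v1 u2 v2 - kk u1 v1 u2 v2 * x \<and> ee u1 v1 u2 v2 - kk u1 v1 u2 v2 * x \<le> 1"
  proof -
    define q where "q = k*(u1+u2-2*x)"
    have q: "q \<le> 11/40" "-q \<le> 11/40" using km unfolding q_def abs_le_iff by auto
    have v: "v1 + v2 \<le> 1 + 2*r" "1 - 2*r \<le> v1 + v2" using a(3,4) unfolding abs_less_iff by auto
    have "0 \<le> (v1+v2)/2 + q/2" using q v r1 by (simp add: field_simps)
    moreover have "(v1+v2)/2 + q/2 \<le> 1" using q v r1 by (simp add: field_simps)
    ultimately show ?thesis unfolding eq q_def[symmetric] by simp
  qed
qed

lemma pd_eq:
  fixes f G :: "real^'n::finite \<Rightarrow> real"
  assumes S: "open S" "w \<in> S" and fG: "\<And>v. v \<in> S \<Longrightarrow> f v = G v"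
    and d: "((\<lambda>t. G (w + t *\<^sub>R axis i 1)) has_real_derivative D) (at 0)"
  shows "partial_deriv i f w = D"
proof -
  let ?s = "(\<lambda>t. w + t *\<^sub>R axis i 1) -` S"
  have o: "open ?s" by (rule open_vimage[OF S(1)]) (intro continuous_intros)
  have "((\<lambda>t. f (w + t *\<^sub>R axis i 1)) has_real_derivative D) (at 0)"
    by (rule has_field_derivative_transform_within_open[OF d o]) (use S fG in auto)
  then show ?thesis unfolding partial_deriv_def by (rule DERIV_imp_deriv)
qed

lemma Hflat_local:
  assumes L: "L \<ge> 1" and w: "w \<in> ball (z0 L) (1/(20*L))"
  shows "Hflat L w = Fe L (w$1) (w$2) (w$3) (w$4)" "w$2 \<noteq> w$4"
proof -
  have c: "\<bar>w$i - z0 L $ i\<bar> < 1/(20*L)" for i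
  proof -
    have "\<bar>w$i - z0 L $ i\<bar> = \<bar>(w - z0 L)$i\<bar>" by simp
    also have "\<dots> \<le> norm (w - z0 L)" by (rule component_le_norm_cart)
    also have "\<dots> < 1/(20*L)" using w by (simp add: dist_norm norm_minus_commute)
    finally show ?thesis .
  qed
  note nb = nbhd_conds[OF L refl, of "w$1" "w$3" "w$2" "w$4"]
  have a: "\<bar>w$1 - L/2\<bar> < 1/(20*L)" "\<bar>w$3 - L/2\<bar> < 1/(20*L)" "\<bar>w$2 - 1/4\<bar> < 1/(20*L)" "\<bar>w$4 - 3/4\<bar> < 1/(20*L)"
    using c[of 1] c[of 2] c[of 3] c[of 4] by simp_all
  have lt: "w$2 < w$4" using nb(1)[OF a] .
  then show "w$2 \<noteq> w$4" by simp
  show "Hflat L w = Fe L (w$1) (w$2) (w$3) (w$4)"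
    unfolding Hflat_def
    by (rule Hcost_formula) (use L lt nb(2)[OF a] in auto)
qed

lemma axis_comp: "(w + t *\<^sub>R axis i 1 :: real^4) $ k = w$k + (if k = i then t else 0)"
  by (simp add: axis_def)

lemma first_partials:
  assumes L: "L \<ge> 1" and w: "w \<in> ball (z0 L) (1/(20*L))"
  shows "partial_deriv 1 (Hflat L) w = F1 L (w$1) (w$2) (w$3) (w$4)"
    "partial_deriv 2 (Hflat L) w = F2 L (w$1) (w$2) (w$3) (w$4)"
    "partial_deriv 3 (Hflat L) w = F3 L (w$1) (w$2) (w$3) (w$4)"
    "partial_deriv 4 (Hflat L) w = F4 L (w$1) (w$2) (w$3) (w$4)"
proof -
  have ne: "w$2 \<noteq> w$4" using Hflat_local[OF L w] by simp
  have loc: "\<And>v. v \<in> ball (z0 L) (1/(20*L)) \<Longrightarrow> Hflat L v = Fe L (v$1) (v$2) (v$3) (v$4)"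
    using Hflat_local[OF L] by blast
  show "partial_deriv 1 (Hflat L) w = F1 L (w$1) (w$2) (w$3) (w$4)"
    by (rule pd_eq[OF open_ball w loc]) (assumption, simp add: axis_def, rule Fe_d1[OF ne])
  show "partial_deriv 2 (Hflat L) w = F2 L (w$1) (w$2) (w$3) (w$4)"
    by (rule pd_eq[OF open_ball w loc]) (assumption, simp add: axis_def, rule Fe_d2[OF ne])
  show "partial_deriv 3 (Hflat L) w = F3 L (w$1) (w$2) (w$3) (w$4)"
    by (rule pd_eq[OF open_ball w loc]) (assumption, simp add: axis_def, rule Fe_d3[OF ne])
  show "partial_deriv 4 (Hflat L) w = F4 L (w$1) (w$2) (w$3) (w$4)"
    by (rule pd_eq[OF open_ball w loc]) (assumption, simp add: axis_def, rule Fe_d4[OF ne])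
qed

definition HM :: "real \<Rightarrow> real^4^4" where
  "HM L = vector [vector [L - L^3/3, 0, L^3/3, 0], vector [0, 3*L/4, 0, -L/4],
                  vector [L^3/3, 0, L - L^3/3, 0], vector [0, -L/4, 0, 3*L/4]]"

lemma hessian_eq:
  assumes L: "L \<ge> 1"
  shows "hessian (Hflat L) (z0 L) = HM L"
proof -
  have c: "z0 L \<in> ball (z0 L) (1/(20*L))" using L by simp
  note fp = first_partials[OF L]
  have h11: "partial_deriv 1 (partial_deriv 1 (Hflat L)) (z0 L) = L - L^3/3"
    by (rule pd_eq[OF open_ball c fp(1)]) (assumption, rule dd_1_1)
  have h12: "partial_deriv 1 (partial_deriv 2 (Hflat L)) (z0 L) = 0"
    by (rule pd_eq[OF open_ball c fp(2)]) (assumption, rule dd_1_2)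
  have h13: "partial_deriv 1 (partial_deriv 3 (Hflat L)) (z0 L) = L^3/3"
    by (rule pd_eq[OF open_ball c fp(3)]) (assumption, rule dd_1_3)
  have h14: "partial_deriv 1 (partial_deriv 4 (Hflat L)) (z0 L) = 0"
    by (rule pd_eq[OF open_ball c fp(4)]) (assumption, rule dd_1_4)
  have h21: "partial_deriv 2 (partial_deriv 1 (Hflat L)) (z0 L) = 0"
    by (rule pd_eq[OF open_ball c fp(1)]) (assumption, rule dd_2_1)
  have h22: "partial_deriv 2 (partial_deriv 2 (Hflat L)) (z0 L) = 3*L/4"
    by (rule pd_eq[OF open_ball c fp(2)]) (assumption, rule dd_2_2)
  have h23: "partial_deriv 2 (partial_deriv 3 (Hflat L)) (z0 L) = 0"
    by (rule pd_eq[OF open_ball c fp(3)]) (assumption, rule dd_2_3)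
  have h24: "partial_deriv 2 (partial_deriv 4 (Hflat L)) (z0 L) = -L/4"
    by (rule pd_eq[OF open_ball c fp(4)]) (assumption, rule dd_2_4)
  have h31: "partial_deriv 3 (partial_deriv 1 (Hflat L)) (z0 L) = L^3/3"
    by (rule pd_eq[OF open_ball c fp(1)]) (assumption, rule dd_3_1)
  have h32: "partial_deriv 3 (partial_deriv 2 (Hflat L)) (z0 L) = 0"
    by (rule pd_eq[OF open_ball c fp(2)]) (assumption, rule dd_3_2)
  have h33: "partial_deriv 3 (partial_deriv 3 (Hflat L)) (z0 L) = L - L^3/3"
    by (rule pd_eq[OF open_ball c fp(3)]) (assumption, rule dd_3_3)
  have h34: "partial_deriv 3 (partial_deriv 4 (Hflat L)) (z0 L) = 0"
    by (rule pd_eq[OF open_ball c fp(4)]) (assumption, rule dd_3_4)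
  have h41: "partial_deriv 4 (partial_deriv 1 (Hflat L)) (z0 L) = 0"
    by (rule pd_eq[OF open_ball c fp(1)]) (assumption, rule dd_4_1)
  have h42: "partial_deriv 4 (partial_deriv 2 (Hflat L)) (z0 L) = -L/4"
    by (rule pd_eq[OF open_ball c fp(2)]) (assumption, rule dd_4_2)
  have h43: "partial_deriv 4 (partial_deriv 3 (Hflat L)) (z0 L) = 0"
    by (rule pd_eq[OF open_ball c fp(3)]) (assumption, rule dd_4_3)
  have h44: "partial_deriv 4 (partial_deriv 4 (Hflat L)) (z0 L) = 3*L/4"
    by (rule pd_eq[OF open_ball c fp(4)]) (assumption, rule dd_4_4)
  show ?thesis unfolding hessian_def vec_eq_iff forall_4
    by (simp add: HM_def h11 h12 h13 h14 h21 h22 h23 h24 h31 h32 h33 h34 h41 h42 h43 h44)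
qed

lemma det_4:
  "det (A::'a::comm_ring_1^4^4) =
    A$1$1 * A$2$2 * A$3$3 * A$4$4 - A$1$1 * A$2$2 * A$3$4 * A$4$3
  - A$1$1 * A$2$3 * A$3$2 * A$4$4 + A$1$1 * A$2$3 * A$3$4 * A$4$2
  + A$1$1 * A$2$4 * A$3$2 * A$4$3 - A$1$1 * A$2$4 * A$3$3 * A$4$2
  - A$1$2 * A$2$1 * A$3$3 * A$4$4 + A$1$2 * A$2$1 * A$3$4 * A$4$3
  + A$1$2 * A$2$3 * A$3$1 * A$4$4 - A$1$2 * A$2$3 * A$3$4 * A$4$1
  - A$1$2 * A$2$4 * A$3$1 * A$4$3 + A$1$2 * A$2$4 * A$3$3 * A$4$1
  + A$1$3 * A$2$1 * A$3$2 * A$4$4 - A$1$3 * A$2$1 * A$3$4 * A$4$2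
  - A$1$3 * A$2$2 * A$3$1 * A$4$4 + A$1$3 * A$2$2 * A$3$4 * A$4$1
  + A$1$3 * A$2$4 * A$3$1 * A$4$2 - A$1$3 * A$2$4 * A$3$2 * A$4$1
  - A$1$4 * A$2$1 * A$3$2 * A$4$3 + A$1$4 * A$2$1 * A$3$3 * A$4$2
  + A$1$4 * A$2$2 * A$3$1 * A$4$3 - A$1$4 * A$2$2 * A$3$3 * A$4$1
  - A$1$4 * A$2$3 * A$3$1 * A$4$2 + A$1$4 * A$2$3 * A$3$2 * A$4$1"
proof -
  have f1: "finite {2::4, 3, 4}" "1 \<notin> {2::4, 3, 4}" by auto
  have f2: "finite {3::4, 4}" "2 \<notin> {3::4, 4}" by auto
  have f3: "finite {4::4}" "3 \<notin> {4::4}" by auto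
  show ?thesis
    unfolding det_def UNIV_4
    unfolding sum_over_permutations_insert[OF f1]
    unfolding sum_over_permutations_insert[OF f2]
    unfolding sum_over_permutations_insert[OF f3]
    unfolding permutes_sing
    by (simp add: sign_swap_id permutation_swap_id permutation_compose sign_compose sign_id swap_id_eq algebra_simps)
qed

definition GM :: "real \<Rightarrow> real \<Rightarrow> real \<Rightarrow> real \<Rightarrow> real^4^4" where
  "GM a b c d = vector [vector [a, 0, b, 0], vector [0, c, 0, d],
                  vector [b, 0, a, 0], vector [0, d, 0, c]]"

lemma charpoly_GM:
  "charpoly (GM a b c d) = [:-(a-b), 1:] * ([:-(a+b), 1:] * [:-(c+d), 1:] * [:-(c-d), 1:])"
proof -
  have "poly (charpoly (GM a b c d)) x = poly ([:-(a-b), 1:] * ([:-(a+b), 1:] * [:-(c+d), 1:] * [:-(c-d), 1:])) x" for x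
    unfolding charpoly_def det_4 by (simp add: GM_def) algebra
  then show ?thesis using poly_eq_poly_eq_iff by blast
qed

lemma GM_mv:
  "(GM a b c d *v v) $ 1 = a * v$1 + b * v$3"
  "(GM a b c d *v v) $ 2 = c * v$2 + d * v$4"
  "(GM a b c d *v v) $ 3 = b * v$1 + a * v$3"
  "(GM a b c d *v v) $ 4 = d * v$2 + c * v$4"
  by (simp_all add: matrix_vector_mult_def sum_4 GM_def)

lemma GM_eig_is: "is_eigenvalue (GM a b c d) (a - b)"
  unfolding is_eigenvalue_def
proof (intro exI conjI)
  show "(vector [1, 0, -1, 0] :: real^4) \<noteq> 0"
    by (metis vector_4(1) zero_index zero_neq_one)
  show "GM a b c d *v (vector [1, 0, -1, 0]) = (a - b) *\<^sub>R (vector [1, 0, -1, 0] :: real^4)"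
    unfolding vec_eq_iff forall_4 GM_mv by (simp add: algebra_simps)
qed

lemma GM_eig_only:
  assumes e: "is_eigenvalue (GM a b c d) l"
    and n: "l \<noteq> a + b" "l \<noteq> c + d" "l \<noteq> c - d"
  shows "l = a - b"
proof (rule ccontr)
  assume ne: "l \<noteq> a - b"
  obtain v where v: "v \<noteq> 0" "GM a b c d *v v = l *\<^sub>R v" using e unfolding is_eigenvalue_def by blast
  have E: "(GM a b c d *v v) $ i = l * v $ i" for i using v(2) by simp
  note E1 = E[of 1, unfolded GM_mv] and E2 = E[of 2, unfolded GM_mv]
    and E3 = E[of 3, unfolded GM_mv] and E4 = E[of 4, unfolded GM_mv]
  have "(a + b - l) * (v$1 + v$3) = 0" using E1 E3 by algebra
  then have s13: "v$1 + v$3 = 0" using n by simp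
  have "(c + d - l) * (v$2 + v$4) = 0" using E2 E4 by algebra
  then have s24: "v$2 + v$4 = 0" using n by simp
  have "(c - d - l) * (v$2 - v$4) = 0" using E2 E4 by algebra
  then have d24: "v$2 - v$4 = 0" using n by simp
  have "(a - b - l) * (v$1 - v$3) = 0" using E1 E3 by algebra
  then have d13: "v$1 - v$3 = 0" using ne by simp
  have "v = 0" unfolding vec_eq_iff forall_4 using s13 s24 d24 d13 by simp
  then show False using v(1) by simp
qed

lemma order_GM:
  assumes "a - b \<noteq> a + b" "a - b \<noteq> c + d" "a - b \<noteq> c - d"
  shows "order (a - b) (charpoly (GM a b c d)) = 1"
proof -
  let ?a = "a - b"
  let ?Q = "[:-(a+b), 1:] * [:-(c+d), 1:] * [:-(c-d), 1:]"
  have pe: "poly ?Q ?a = (?a - (a+b)) * (?a - (c+d)) * (?a - (c-d))" by (simp add: algebra_simps)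
  have pQ: "poly ?Q ?a \<noteq> 0" unfolding pe
    by (metis assms mult_eq_0_iff right_minus_eq)
  have Qnz: "?Q \<noteq> 0" using pQ by auto
  have nz: "[:-?a, 1:] * ?Q \<noteq> 0"
    by (metis Qnz mult_eq_0_iff pCons_eq_0_iff zero_neq_one)
  have "order ?a ([:-?a, 1:] * ?Q) = order ?a ([:-?a, 1:]) + order ?a ?Q"
    by (rule order_mult[OF nz])
  also have "order ?a ([:-?a, 1:]) = 1" using order_power_n_n[of ?a 1] by simp
  also have "order ?a ?Q = 0" by (rule order_0I[OF pQ])
  finally show ?thesis unfolding charpoly_GM by simp
qed

lemma HM_GM: "HM L = GM (L - L^3/3) (L^3/3) (3*L/4) (-L/4)"
  unfolding HM_def GM_def by simp

theorem mainTheorem9: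
  fixes L :: real
  assumes "L \<ge> 1"
  shows "(L > sqrt (3/2) \<longrightarrow>
            num_neg_eigenvalues (hessian (Hflat L) (vector [L/2, 1/4, L/2, 3/4])) = 1)
       \<and> (L = sqrt (3/2) \<longrightarrow>
            is_eigenvalue (hessian (Hflat L) (vector [L/2, 1/4, L/2, 3/4])) 0)"
proof -
  define M where "M = GM (L - L^3/3) (L^3/3) (3*L/4) (-L/4)"
  have Hs: "hessian (Hflat L) (vector [L/2, 1/4, L/2, 3/4]) = M"
    using hessian_eq[OF assms] unfolding z0_def HM_GM M_def .
  have L0: "L > 0" using assms by simp
  have ab: "(L - L^3/3) - L^3/3 = L * (1 - 2*L^2/3)"
    by (simp add: algebra_simps power3_eq_cube power2_eq_square)
  have sums: "(L - L^3/3) + L^3/3 = L" "3*L/4 + -L/4 = L/2" "3*L/4 - -L/4 = L" by simp_all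
  have eigM: "is_eigenvalue M (L * (1 - 2*L^2/3))"
    using GM_eig_is[of "L - L^3/3" "L^3/3" "3*L/4" "-L/4"] unfolding M_def ab .
  show ?thesis
  proof (intro conjI impI)
    assume gt: "L > sqrt (3/2)"
    have "sqrt (3/2) ^ 2 < L ^ 2" by (rule power_strict_mono[OF gt]) auto
    then have L2: "L^2 > 3/2" by simp
    have neg: "L * (1 - 2*L^2/3) < 0" using L0 L2 by (simp add: mult_pos_neg)
    have S: "{c. c < 0 \<and> is_eigenvalue M c} = {L * (1 - 2*L^2/3)}"
    proof (rule set_eqI, rule iffI)
      fix c assume "c \<in> {c. c < 0 \<and> is_eigenvalue M c}"
      then have c: "c < 0" "is_eigenvalue M c" by auto
      have "c = (L - L^3/3) - L^3/3"
        by (rule GM_eig_only[OF c(2)[unfolded M_def]]) (use c(1) L0 sums in auto)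
      then show "c \<in> {L * (1 - 2*L^2/3)}" unfolding ab by simp
    qed (use neg eigM in auto)
    have n1: "L * (1 - 2*L^2/3) \<noteq> L" "L * (1 - 2*L^2/3) \<noteq> L/2" using neg L0 by linarith+
    have ord: "order (L * (1 - 2*L^2/3)) (charpoly M) = 1"
      unfolding M_def using order_GM[of "L - L^3/3" "L^3/3" "3*L/4" "-L/4", unfolded ab sums, OF n1(1) n1(2) n1(1)] .
    show "num_neg_eigenvalues (hessian (Hflat L) (vector [L/2, 1/4, L/2, 3/4])) = 1"
      unfolding Hs num_neg_eigenvalues_def S using ord by simp
  next
    assume eq: "L = sqrt (3/2)"
    then have "L^2 = 3/2" by simp
    then have z: "L * (1 - 2*L^2/3) = 0" by simp
    show "is_eigenvalue (hessian (Hflat L) (vector [L/2, 1/4, L/2, 3/4])) 0"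
      unfolding Hs using eigM unfolding z .
  qed
qed

end
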